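(* Under the hypotheses and notation of the following setting: $Q(z)=\Gamma_0^+(A-z)^{-1}\Gamma_0\in N_\kappa(H)$ with $A$ a bounded self-adjoint operator in a Pontryagin space $K$, $\Gamma_0:H\to K$ bounded, $\Gamma_0^+\Gamma_0$ boundedly invertible, $P:=\Gamma_0(\Gamma_0^+\Gamma_0)^{-1}\Gamma_0^+$, $\tilde A:=(I-P)A(I-P)$ acting in $(I-P)K$, and $\hat Q(z):=-Q(z)^{-1}$, it holds for every $z\in\rho(A)\cap\rho(\tilde A)$ that $$\hat Q(z)\Gamma_0^+=(\Gamma_0^+\Gamma_0)^{-1}\Gamma_0^+\Big\{-I+A(I-P)(\tilde A-z)^{-1}(I-P)\Big\}(A-z).$$
   Context: $H$ is a Hilbert space; $(K,[\cdot,\cdot])$ a Pontryagin space; for bounded $\Gamma_0:H\to K$, $\Gamma_0^+$ is defined by $(h,\Gamma_0^+k)=[\Gamma_0h,k]$. $N_\kappa(H)$ denotes generalized Nevanlinna functions with $\kappa$ negative squares. $(I-P)(\tilde A-z)^{-1}(I-P)$ denotes the operator on $K$ equal to $(\tilde A-z)^{-1}$ on $(I-P)K$ and $0$ on $PK$; $P$ is an orthogonal projection in $K$ with $PK=\Gamma_0(H)$ and $(I-P)K=\ker\Gamma_0^+$. *)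

theory Defs
  imports Complex_Main
begin

class cvec = ab_group_add +
  fixes scaleC :: "complex \<Rightarrow> 'a \<Rightarrow> 'a" (infixr "*\<^sub>C" 75)
  assumes scaleC_add_right: "a *\<^sub>C (x + y) = a *\<^sub>C x + a *\<^sub>C y"
    and scaleC_add_left: "(a + b) *\<^sub>C x = a *\<^sub>C x + b *\<^sub>C x"
    and scaleC_scaleC: "a *\<^sub>C (b *\<^sub>C x) = (a * b) *\<^sub>C x"
    and scaleC_one: "1 *\<^sub>C x = x"

definition clinear :: "('a::cvec \<Rightarrow> 'b::cvec) \<Rightarrow> bool" where
  "clinear T \<longleftrightarrow> (\<forall>x y. T (x + y) = T x + T y) \<and> (\<forall>c x. T (c *\<^sub>C x) = c *\<^sub>C T x)"

definition hermitian_form :: "('a::cvec \<Rightarrow> 'a \<Rightarrow> complex) \<Rightarrow> bool" where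
  "hermitian_form f \<longleftrightarrow>
     (\<forall>x y w. f (x + y) w = f x w + f y w) \<and>
     (\<forall>c x y. f (c *\<^sub>C x) y = c * f x y) \<and>
     (\<forall>x y. f y x = cnj (f x y))"

definition ipnorm :: "('a::cvec \<Rightarrow> 'a \<Rightarrow> complex) \<Rightarrow> 'a \<Rightarrow> real" where
  "ipnorm ip x = sqrt (Re (ip x x))"

definition hilbert_space :: "('a::cvec \<Rightarrow> 'a \<Rightarrow> complex) \<Rightarrow> bool" where
  "hilbert_space ip \<longleftrightarrow> hermitian_form ip \<and>
     (\<forall>x. 0 \<le> Re (ip x x)) \<and> (\<forall>x. ip x x = 0 \<longrightarrow> x = 0) \<and>
     (\<forall>X :: nat \<Rightarrow> 'a.
        (\<forall>e>0. \<exists>N. \<forall>m\<ge>N. \<forall>n\<ge>N. ipnorm ip (X m - X n) < e) \<longrightarrow>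
        (\<exists>L. (\<lambda>n. ipnorm ip (X n - L)) \<longlonglongrightarrow> 0))"

text \<open>The Hilbert inner product of a fundamental symmetry J: (x,y)_J = [Jx,y].\<close>
definition fund_ip :: "('a::cvec \<Rightarrow> 'a \<Rightarrow> complex) \<Rightarrow> ('a \<Rightarrow> 'a) \<Rightarrow> 'a \<Rightarrow> 'a \<Rightarrow> complex" where
  "fund_ip f J x y = f (J x) y"

definition finite_dim_subspace :: "'a::cvec set \<Rightarrow> bool" where
  "finite_dim_subspace S \<longleftrightarrow> (\<exists>B. finite B \<and> B \<subseteq> S \<and>
      (\<forall>x\<in>S. \<exists>c. x = (\<Sum>b\<in>B. c b *\<^sub>C b)))"

text \<open>(K,[.,.]) is a Pontryagin space with fundamental symmetry J: J is a fundamental symmetry,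
  [J.,.] makes K a Hilbert space, and the negative component K_- = ker(I+J) is finite-dimensional.\<close>
definition pontryagin_space :: "('a::cvec \<Rightarrow> 'a \<Rightarrow> complex) \<Rightarrow> ('a \<Rightarrow> 'a) \<Rightarrow> bool" where
  "pontryagin_space f J \<longleftrightarrow> hermitian_form f \<and> clinear J \<and> (\<forall>x. J (J x) = x) \<and>
     (\<forall>x y. f (J x) y = f x (J y)) \<and> hilbert_space (fund_ip f J) \<and>
     finite_dim_subspace {x. J x = - x}"

definition bounded_op :: "('a::cvec \<Rightarrow> 'a \<Rightarrow> complex) \<Rightarrow> ('b::cvec \<Rightarrow> 'b \<Rightarrow> complex) \<Rightarrow> ('a \<Rightarrow> 'b) \<Rightarrow> bool" where
  "bounded_op ipa ipb T \<longleftrightarrow> clinear T \<and> (\<exists>C. \<forall>x. ipnorm ipb (T x) \<le> C * ipnorm ipa x)"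

text \<open>Gp is the adjoint Gamma_0^+ of G : H \<rightarrow> K, i.e. (h, Gp k) = [G h, k].\<close>
definition is_adjoint :: "('h::cvec \<Rightarrow> 'h \<Rightarrow> complex) \<Rightarrow> ('k::cvec \<Rightarrow> 'k \<Rightarrow> complex) \<Rightarrow> ('h \<Rightarrow> 'k) \<Rightarrow> ('k \<Rightarrow> 'h) \<Rightarrow> bool" where
  "is_adjoint ipH f G Gp \<longleftrightarrow> (\<forall>h k. ipH h (Gp k) = f (G h) k)"

definition selfadjoint :: "('k::cvec \<Rightarrow> 'k \<Rightarrow> complex) \<Rightarrow> ('k \<Rightarrow> 'k) \<Rightarrow> bool" where
  "selfadjoint f A \<longleftrightarrow> (\<forall>x y. f (A x) y = f x (A y))"

definition boundedly_invertible :: "('a::cvec \<Rightarrow> 'a \<Rightarrow> complex) \<Rightarrow> ('a \<Rightarrow> 'a) \<Rightarrow> bool" where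
  "boundedly_invertible ip T \<longleftrightarrow> bij T \<and> bounded_op ip ip (inv T)"

definition resolvent :: "'a set \<Rightarrow> ('a::cvec \<Rightarrow> 'a) \<Rightarrow> complex \<Rightarrow> 'a \<Rightarrow> 'a" where
  "resolvent S T z = the_inv_into S (\<lambda>x. T x - z *\<^sub>C x)"

definition resolvent_set :: "('a::cvec \<Rightarrow> 'a \<Rightarrow> complex) \<Rightarrow> 'a set \<Rightarrow> ('a \<Rightarrow> 'a) \<Rightarrow> complex set" where
  "resolvent_set ip S T = {z. bij_betw (\<lambda>x. T x - z *\<^sub>C x) S S \<and>
      (\<exists>C. \<forall>y\<in>S. ipnorm ip (resolvent S T z y) \<le> C * ipnorm ip y)}"

definition Pproj :: "('h \<Rightarrow> 'k) \<Rightarrow> ('k \<Rightarrow> 'h) \<Rightarrow> 'k \<Rightarrow> 'k" where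
  "Pproj G Gp k = G (inv (Gp \<circ> G) (Gp k))"

definition compP :: "('h \<Rightarrow> 'k::cvec) \<Rightarrow> ('k \<Rightarrow> 'h) \<Rightarrow> 'k \<Rightarrow> 'k" where
  "compP G Gp k = k - Pproj G Gp k"

definition Atilde :: "('k::cvec \<Rightarrow> 'k) \<Rightarrow> ('h \<Rightarrow> 'k) \<Rightarrow> ('k \<Rightarrow> 'h) \<Rightarrow> 'k \<Rightarrow> 'k" where
  "Atilde A G Gp x = compP G Gp (A (compP G Gp x))"

definition Qfun :: "('k::cvec \<Rightarrow> 'k) \<Rightarrow> ('h \<Rightarrow> 'k) \<Rightarrow> ('k \<Rightarrow> 'h) \<Rightarrow> complex \<Rightarrow> 'h \<Rightarrow> 'h" where
  "Qfun A G Gp z h = Gp (resolvent UNIV A z (G h))"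

definition Qhat :: "('k::cvec \<Rightarrow> 'k) \<Rightarrow> ('h \<Rightarrow> 'k) \<Rightarrow> ('k \<Rightarrow> 'h) \<Rightarrow> complex \<Rightarrow> 'h \<Rightarrow> 'h::cvec" where
  "Qhat A G Gp z h = - inv (Qfun A G Gp z) h"

text \<open>(I-P)(A~ - z)^{-1}(I-P): equals (A~ - z)^{-1} on (I-P)K and 0 on PK.\<close>
definition compressed_resolvent :: "('k::cvec \<Rightarrow> 'k) \<Rightarrow> ('h \<Rightarrow> 'k) \<Rightarrow> ('k \<Rightarrow> 'h) \<Rightarrow> complex \<Rightarrow> 'k \<Rightarrow> 'k" where
  "compressed_resolvent A G Gp z k =
     compP G Gp (resolvent (range (compP G Gp)) (Atilde A G Gp) z (compP G Gp k))"

end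

theory Submission
  imports Defs
begin

lemma add_diff_hom:
  fixes T :: "'a::ab_group_add \<Rightarrow> 'b::ab_group_add"
  assumes "\<forall>x y. T (x + y) = T x + T y"
  shows "T (x - y) = T x - T y"
proof -
  have "T (x - y) + T y = T x" using assms by (metis diff_add_cancel)
  then show ?thesis by (metis add_diff_cancel)
qed

lemma add_minus_hom:
  fixes T :: "'a::ab_group_add \<Rightarrow> 'b::ab_group_add"
  assumes "\<forall>x y. T (x + y) = T x + T y"
  shows "T (- x) = - T x" and "T 0 = 0"
proof -
  show "T 0 = 0" using assms by (metis add_cancel_right_right add_0)
  then show "T (- x) = - T x" using add_diff_hom[OF assms, of 0 x] by simp
qed

lemma scaleC_diff_right': "(a::complex) *\<^sub>C (x - y) = a *\<^sub>C x - a *\<^sub>C (y::'a::cvec)"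
  using add_diff_hom[of "\<lambda>x. a *\<^sub>C x"] scaleC_add_right by blast

lemma scaleC_zero_right' [simp]: "(a::complex) *\<^sub>C (0::'a::cvec) = 0"
  using scaleC_diff_right'[of a 0 0] by simp

theorem corollary1:
  fixes ipH :: "'h::cvec \<Rightarrow> 'h \<Rightarrow> complex"
    and f :: "'k::cvec \<Rightarrow> 'k \<Rightarrow> complex"
    and J :: "'k \<Rightarrow> 'k"
    and A :: "'k \<Rightarrow> 'k"
    and G :: "'h \<Rightarrow> 'k"
    and Gp :: "'k \<Rightarrow> 'h"
    and z :: complex
  assumes "hilbert_space ipH"
    and "pontryagin_space f J"
    and "bounded_op (fund_ip f J) (fund_ip f J) A"
    and "selfadjoint f A"
    and "bounded_op ipH (fund_ip f J) G"
    and "is_adjoint ipH f G Gp"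
    and "boundedly_invertible ipH (Gp \<circ> G)"
    and "z \<in> resolvent_set (fund_ip f J) UNIV A"
    and "z \<in> resolvent_set (fund_ip f J) (range (compP G Gp)) (Atilde A G Gp)"
  shows "\<forall>k. Qhat A G Gp z (Gp k) =
           inv (Gp \<circ> G) (Gp (- (A k - z *\<^sub>C k)
              + A (compP G Gp (compressed_resolvent A G Gp z (A k - z *\<^sub>C k)))))"
proof
  fix k
  have hH: "hermitian_form ipH" and defH: "\<And>x. ipH x x = 0 \<Longrightarrow> x = 0"
    using assms(1) unfolding hilbert_space_def by auto
  have hf: "hermitian_form f" using assms(2) unfolding pontryagin_space_def by auto
  have adj: "\<And>h k. ipH h (Gp k) = f (G h) k" using assms(6) unfolding is_adjoint_def by auto
  have Aadd: "\<forall>x y. A (x + y) = A x + A y" and Asc: "\<And>c x. A (c *\<^sub>C x) = c *\<^sub>C A x"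
    using assms(3) unfolding bounded_op_def clinear_def by auto
  have Gadd: "\<forall>x y. G (x + y) = G x + G y" and Gsc: "\<And>c x. G (c *\<^sub>C x) = c *\<^sub>C G x"
    using assms(5) unfolding bounded_op_def clinear_def by auto
  have ext: "a = b" if "\<And>h. ipH h a = ipH h b" for a b
  proof -
    have add2: "\<And>h x y. ipH h (x + y) = ipH h x + ipH h y"
      using hH unfolding hermitian_form_def by (metis complex_cnj_add)
    have "ipH (a - b) (a - b) = ipH (a - b) a - ipH (a - b) b"
      using add2 by (metis diff_add_cancel add_diff_cancel)
    then have "ipH (a - b) (a - b) = 0" using that by simp
    then show ?thesis using defH by (metis right_minus_eq)
  qed
  have fadd2: "\<And>h x y. f h (x + y) = f h x + f h y"
    using hf unfolding hermitian_form_def by (metis complex_cnj_add)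
  have fsc2: "\<And>h c x. f h (c *\<^sub>C x) = cnj c * f h x"
    using hf unfolding hermitian_form_def by (metis complex_cnj_mult complex_cnj_cnj)
  have Hadd2: "\<And>h x y. ipH h (x + y) = ipH h x + ipH h y"
    using hH unfolding hermitian_form_def by (metis complex_cnj_add)
  have Hsc2: "\<And>h c x. ipH h (c *\<^sub>C x) = cnj c * ipH h x"
    using hH unfolding hermitian_form_def by (metis complex_cnj_mult complex_cnj_cnj)
  have Gpadd: "\<forall>x y. Gp (x + y) = Gp x + Gp y"
    using ext adj fadd2 Hadd2 by metis
  have Gpsc: "\<And>c x. Gp (c *\<^sub>C x) = c *\<^sub>C Gp x"
    using ext adj fsc2 Hsc2 by metis
  define B where "B = Gp \<circ> G"
  have bijB: "bij B" using assms(7) unfolding boundedly_invertible_def B_def by auto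
  have iB1: "\<And>x. inv B (B x) = x" using bijB by (simp add: bij_is_inj)
  have iB2: "\<And>y. B (inv B y) = y" using bijB by (meson bij_inv_eq_iff)
  have Badd: "\<forall>x y. B (x + y) = B x + B y" using Gadd Gpadd B_def by simp
  have Bsc: "\<And>c x. B (c *\<^sub>C x) = c *\<^sub>C B x" using Gsc Gpsc B_def by simp
  have iBadd: "\<forall>x y. inv B (x + y) = inv B x + inv B y"
    using Badd iB1 iB2 by metis
  have iBsc: "\<And>c x. inv B (c *\<^sub>C x) = c *\<^sub>C inv B x"
    using Bsc iB1 iB2 by metis
  define C where "C = compP G Gp"
  have Cdef: "\<And>x. C x = x - G (inv B (Gp x))"
    unfolding C_def compP_def Pproj_def B_def by simp
  have Cadd: "\<forall>x y. C (x + y) = C x + C y"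
    unfolding Cdef using Gpadd iBadd Gadd by (simp add: algebra_simps del: Cdef)
  have Csc: "\<And>c x. C (c *\<^sub>C x) = c *\<^sub>C C x"
    using Cdef Gpsc iBsc Gsc by (simp add: scaleC_diff_right')
  have GpC: "\<And>x. Gp (C x) = 0"
    using Cdef add_diff_hom[OF Gpadd] iB2 B_def by simp
  have G0: "G 0 = 0" using add_minus_hom(2)[OF Gadd] .
  have iB0: "inv B 0 = 0" using add_minus_hom(2)[OF iBadd] .
  have CC: "C (C x) = C x" for x using Cdef[of "C x"] GpC[of x] iB0 G0 by simp
  have CG: "\<And>h. C (G h) = 0" using Cdef iB1 B_def by simp
  define F where "F = (\<lambda>x. A x - z *\<^sub>C x)"
  define S where "S = range C"
  define Ft where "Ft = (\<lambda>x. Atilde A G Gp x - z *\<^sub>C x)"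
  have bijF: "bij_betw F UNIV UNIV" using assms(8) unfolding resolvent_set_def F_def by auto
  have bijFt: "bij_betw Ft S S" using assms(9) unfolding resolvent_set_def Ft_def S_def C_def by auto
  have RA: "\<And>x. resolvent UNIV A z (F x) = x"
    unfolding resolvent_def F_def[symmetric]
    using bijF by (simp add: bij_betw_def the_inv_into_f_f)
  have RA2: "\<And>y. F (resolvent UNIV A z y) = y"
    unfolding resolvent_def F_def[symmetric]
    using bijF by (simp add: bij_betw_def f_the_inv_into_f)
  have Atil: "\<And>x. x \<in> S \<Longrightarrow> Ft x = C (F x)"
  proof -
    fix x assume "x \<in> S"
    then have cx: "C x = x" using CC S_def by auto
    have "Ft x = C (A x) - z *\<^sub>C x" unfolding Ft_def Atilde_def C_def[symmetric] cx by simp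
    also have "\<dots> = C (F x)" unfolding F_def add_diff_hom[OF Cadd] Csc cx by simp
    finally show "Ft x = C (F x)" .
  qed
  define v where "v = F k"
  define u where "u = the_inv_into S Ft (C v)"
  have CvS: "C v \<in> S" unfolding S_def by simp
  have uS: "u \<in> S" unfolding u_def using bijFt CvS
    by (metis bij_betw_def the_inv_into_into order_refl)
  have Fu: "Ft u = C v" unfolding u_def using bijFt CvS
    by (simp add: bij_betw_def f_the_inv_into_f)
  have Cu: "C u = u" using uS CC S_def by auto
  have cr: "compressed_resolvent A G Gp z (A k - z *\<^sub>C k) = u"
    unfolding compressed_resolvent_def C_def[symmetric] resolvent_def
      F_def[symmetric] v_def[symmetric] u_def[symmetric] S_def[symmetric] Ft_def[symmetric]
    using Cu unfolding u_def v_def F_def by simp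
  define y where "y = - v + A u"
  define w where "w = - inv B (Gp y)"
  have CAu: "C (A u) = C v + z *\<^sub>C u"
    using Fu Atil[OF uS] unfolding F_def add_diff_hom[OF Cadd] Csc Cu by (simp add: algebra_simps)
  have Gw: "G w = F (k - u)"
  proof -
    have "G w = - G (inv B (Gp y))" unfolding w_def using add_minus_hom(1)[OF Gadd] by simp
    also have "\<dots> = C y - y" using Cdef[of y] by simp
    also have "\<dots> = - C v + C (A u) + v - A u"
      unfolding y_def Cadd[rule_format] add_minus_hom(1)[OF Cadd] by simp
    also have "\<dots> = F (k - u)" unfolding CAu v_def F_def add_diff_hom[OF Aadd] scaleC_diff_right'
      by (simp add: algebra_simps)
    finally show ?thesis .
  qed
  have Qw: "Qfun A G Gp z w = Gp k"
    unfolding Qfun_def Gw RA add_diff_hom[OF Gpadd] using GpC[of u] Cu by simp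
  have injQ: "inj (Qfun A G Gp z)"
  proof (rule injI)
    fix h1 h2 assume eq: "Qfun A G Gp z h1 = Qfun A G Gp z h2"
    define x1 where "x1 = resolvent UNIV A z (G h1)"
    define x2 where "x2 = resolvent UNIV A z (G h2)"
    define x where "x = x1 - x2"
    have Fx: "F x = G (h1 - h2)"
      unfolding x_def F_def add_diff_hom[OF Aadd] scaleC_diff_right' add_diff_hom[OF Gadd]
      using RA2[of "G h1"] RA2[of "G h2"] unfolding x1_def x2_def F_def
      by (simp add: algebra_simps)
    have Gpx: "Gp x = 0" using eq unfolding Qfun_def x_def x1_def x2_def add_diff_hom[OF Gpadd]
      by simp
    have Cx: "C x = x" using Cdef[of x] Gpx iB0 G0 by simp
    have xS: "x \<in> S" unfolding S_def using Cx by (metis rangeI)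
    have "Ft x = 0" using Atil[OF xS] Fx CG by simp
    moreover have zS: "0 \<in> S" unfolding S_def using CG by (metis rangeI)
    moreover have "Ft 0 = 0" using Atil[OF zS] unfolding F_def
      using add_minus_hom(2)[OF Aadd] add_minus_hom(2)[OF Cadd] by simp
    ultimately have "x = 0" using bijFt xS zS unfolding bij_betw_def inj_on_def by metis
    then have "G (h1 - h2) = 0" using Fx unfolding F_def
      using add_minus_hom(2)[OF Aadd] by (metis diff_zero scaleC_diff_right' diff_self)
    then have "B (h1 - h2) = 0" unfolding B_def using add_minus_hom(2)[OF Gpadd] by simp
    then have "h1 - h2 = 0" using iB1 iB0 by metis
    then show "h1 = h2" by simp
  qed
  have "inv (Qfun A G Gp z) (Gp k) = w" using Qw injQ by (metis inv_f_f)
  then show "Qhat A G Gp z (Gp k) =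
           inv (Gp \<circ> G) (Gp (- (A k - z *\<^sub>C k)
              + A (compP G Gp (compressed_resolvent A G Gp z (A k - z *\<^sub>C k)))))"
    unfolding Qhat_def cr C_def[symmetric] Cu F_def[symmetric] v_def[symmetric] y_def[symmetric]
      B_def[symmetric] w_def by (simp add: y_def v_def F_def)
qed

end
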